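(* In $\mathcal H_{n,r}$ we have (1) $g_ig_j=g_jg_i$ for $1\le i,j\le n-1$ with $|i-j|>1$, and (2) $g_ig_{i+1}g_i=g_{i+1}g_ig_{i+1}$ for $1\le i\le n-2$.
   Context: Standing setup: $R$ is an integral domain, $n\ge 2$, $r\ge 1$, and $q,u_1,\ldots,u_r\in R$ with $q$ invertible in $R$ and $\Delta:=\prod_{1\le j<i\le r}(u_i-u_j)$ invertible in $R$. For $1\le c\le r$ let $F_c(X)\in R[X]$ be the unique polynomial of degree $\le r-1$ with $F_c(u_{c'})=\delta_{c,c'}\Delta$ for all $1\le c'\le r$. The modified Ariki–Koike (Shoji) algebra $\mathcal H_{n,r}=\mathcal H_{n,r}(R,q,u_1,\ldots,u_r)$ is the associative $R$-algebra generated by $t_1,\ldots,t_n,T_1,\ldots,T_{n-1}$ subject to: $(T_i-q)(T_i+q^{-1})=0$; $(t_i-u_1)\cdots(t_i-u_r)=0$; $T_iT_{i+1}T_i=T_{i+1}T_iT_{i+1}$; $T_iT_j=T_jT_i$ for $|i-j|\ge2$; $t_it_j=t_jt_i$; $T_jt_k=t_kT_j$ for $k\ne j,j+1$; and for $2\le j\le n$: $T_{j-1}t_j=t_{j-1}T_{j-1}+\Delta^{-2}\sum_{1\le c_1<c_2\le r}(u_{c_2}-u_{c_1})(q-q^{-1})F_{c_1}(t_{j-1})F_{c_2}(t_j)$ and $T_{j-1}t_{j-1}=t_jT_{j-1}-\Delta^{-2}\sum_{1\le c_1<c_2\le r}(u_{c_2}-u_{c_1})(q-q^{-1})F_{c_1}(t_{j-1})F_{c_2}(t_j)$.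 Write $[1,r]=\{1,\ldots,r\}$; for $\mathbf k=(k_1,\ldots,k_n)\in[1,r]^n$ set $b_{\mathbf k}:=\prod_{i=1}^n\prod_{1\le j\le r,\,j\ne k_i}\frac{t_i-u_j}{u_{k_i}-u_j}$. For $1\le i,j\le n$ let $B'_{i,j}:=-(q-q^{-1})\sum_{\mathbf k\in[1,r]^n,\ k_i<k_j}b_{\mathbf k}$, and for $1\le i\le n-1$ let $g_i:=T_i+B'_{i,i+1}$. *)

theory Defs
  imports "HOL-Computational_Algebra.Polynomial" "HOL-Library.FuncSet"
begin

text \<open>An algebra over a commutative ring R is modelled as a ring A (type class ring_1)
  together with a ring homomorphism phi from R into the centre of A (structure map).\<close>

definition alg_struct :: "('r::comm_ring_1 \<Rightarrow> 'a::ring_1) \<Rightarrow> bool" where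
  "alg_struct phi \<longleftrightarrow> phi 1 = 1 \<and> (\<forall>x y. phi (x + y) = phi x + phi y)
     \<and> (\<forall>x y. phi (x * y) = phi x * phi y) \<and> (\<forall>x a. phi x * a = a * phi x)"

definition rinv :: "'r::comm_ring_1 \<Rightarrow> 'r" where
  "rinv x = (THE y. x * y = 1)"

definition invertible_R :: "'r::comm_ring_1 \<Rightarrow> bool" where
  "invertible_R x \<longleftrightarrow> (\<exists>y. x * y = 1)"

definition Delta :: "nat \<Rightarrow> (nat \<Rightarrow> 'r::comm_ring_1) \<Rightarrow> 'r" where
  "Delta r u = (\<Prod>i\<in>{1..r}. \<Prod>j\<in>{1..<i}. (u i - u j))"

definition Fpoly :: "nat \<Rightarrow> (nat \<Rightarrow> 'r::comm_ring_1) \<Rightarrow> nat \<Rightarrow> 'r poly" where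
  "Fpoly r u c = (THE p. degree p \<le> r - 1 \<and>
      (\<forall>c'\<in>{1..r}. poly p (u c') = (if c = c' then Delta r u else 0)))"

definition peval :: "('r::comm_ring_1 \<Rightarrow> 'a::ring_1) \<Rightarrow> 'r poly \<Rightarrow> 'a \<Rightarrow> 'a" where
  "peval phi p x = (\<Sum>k\<le>degree p. phi (coeff p k) * x ^ k)"

definition corr :: "('r::comm_ring_1 \<Rightarrow> 'a::ring_1) \<Rightarrow> nat \<Rightarrow> 'r \<Rightarrow> (nat \<Rightarrow> 'r)
     \<Rightarrow> (nat \<Rightarrow> 'a) \<Rightarrow> nat \<Rightarrow> 'a" where
  "corr phi r q u t j = (\<Sum>c1\<in>{1..r}. \<Sum>c2\<in>{c1<..r}.
      phi (rinv ((Delta r u)^2) * (u c2 - u c1) * (q - rinv q))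
      * peval phi (Fpoly r u c1) (t (j - 1)) * peval phi (Fpoly r u c2) (t j))"

text \<open>Defining relations of the modified Ariki-Koike (Shoji) algebra H_{n,r}, for
  elements t_1..t_n, T_1..T_{n-1} of an R-algebra (A, phi).\<close>
definition shoji_rels :: "('r::comm_ring_1 \<Rightarrow> 'a::ring_1) \<Rightarrow> nat \<Rightarrow> nat \<Rightarrow> 'r
     \<Rightarrow> (nat \<Rightarrow> 'r) \<Rightarrow> (nat \<Rightarrow> 'a) \<Rightarrow> (nat \<Rightarrow> 'a) \<Rightarrow> bool" where
  "shoji_rels phi n r q u t T \<longleftrightarrow>
     (\<forall>i\<in>{1..n-1}. (T i - phi q) * (T i + phi (rinv q)) = 0)
   \<and> (\<forall>i\<in>{1..n}. prod_list (map (\<lambda>c. t i - phi (u c)) [1..<r+1]) = 0)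
   \<and> (\<forall>i\<in>{1..n-2}. T i * T (i+1) * T i = T (i+1) * T i * T (i+1))
   \<and> (\<forall>i\<in>{1..n-1}. \<forall>j\<in>{1..n-1}. (i > j + 1 \<or> j > i + 1) \<longrightarrow> T i * T j = T j * T i)
   \<and> (\<forall>i\<in>{1..n}. \<forall>j\<in>{1..n}. t i * t j = t j * t i)
   \<and> (\<forall>j\<in>{1..n-1}. \<forall>k\<in>{1..n}. k \<noteq> j \<and> k \<noteq> j + 1 \<longrightarrow> T j * t k = t k * T j)
   \<and> (\<forall>j\<in>{2..n}. T (j-1) * t j = t (j-1) * T (j-1) + corr phi r q u t j)
   \<and> (\<forall>j\<in>{2..n}. T (j-1) * t (j-1) = t j * T (j-1) - corr phi r q u t j)"

text \<open>b_k = prod_i prod_{j ~= k_i} (t_i - u_j)/(u_{k_i} - u_j)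
  (factors commute by the relations; an ordered product is taken).\<close>
definition bk :: "('r::comm_ring_1 \<Rightarrow> 'a::ring_1) \<Rightarrow> nat \<Rightarrow> nat \<Rightarrow> (nat \<Rightarrow> 'r)
     \<Rightarrow> (nat \<Rightarrow> 'a) \<Rightarrow> (nat \<Rightarrow> nat) \<Rightarrow> 'a" where
  "bk phi n r u t k = prod_list (map (\<lambda>i. prod_list (map
      (\<lambda>j. (t i - phi (u j)) * phi (rinv (u (k i) - u j)))
      (filter (\<lambda>j. j \<noteq> k i) [1..<r+1]))) [1..<n+1])"

definition Bp :: "('r::comm_ring_1 \<Rightarrow> 'a::ring_1) \<Rightarrow> nat \<Rightarrow> nat \<Rightarrow> 'r \<Rightarrow> (nat \<Rightarrow> 'r)
     \<Rightarrow> (nat \<Rightarrow> 'a) \<Rightarrow> nat \<Rightarrow> nat \<Rightarrow> 'a" where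
  "Bp phi n r q u t i j = phi (- (q - rinv q)) *
     (\<Sum>k\<in>{k\<in>PiE {1..n} (\<lambda>_. {1..r}). k i < k j}. bk phi n r u t k)"

definition gen :: "('r::comm_ring_1 \<Rightarrow> 'a::ring_1) \<Rightarrow> nat \<Rightarrow> nat \<Rightarrow> 'r \<Rightarrow> (nat \<Rightarrow> 'r)
     \<Rightarrow> (nat \<Rightarrow> 'a) \<Rightarrow> (nat \<Rightarrow> 'a) \<Rightarrow> nat \<Rightarrow> 'a" where
  "gen phi n r q u t T i = T i + Bp phi n r q u t i (i + 1)"

end

theory Submission
  imports Defs
begin


lemma rinv_eq: fixes x :: "'r::idom" assumes "x * y = 1" shows "rinv x = y"
  unfolding rinv_def
proof (rule the_equality)
  show "x * y = 1" by fact
  fix z assume "x * z = 1"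
  then have "x * z = x * y" using assms by simp
  moreover have "x \<noteq> 0" using assms by auto
  ultimately show "z = y" by simp
qed

lemma rinv_mult: fixes x :: "'r::idom" assumes "x dvd 1" shows "x * rinv x = 1"
proof -
  from assms obtain y where "1 = x * y" by (auto elim: dvdE)
  then show ?thesis using rinv_eq[of x y] by simp
qed

lemma sub_lem: "(A::'a::ab_group_add) + B = C + D \<Longrightarrow> A - C = D - B"
  by (simp add: algebra_simps)

lemma braid_abs:
  fixes x y z lam :: "'a::ring_1" and a b' c :: nat
  assumes LR: "x * (y * (x * z)) + (if b' < c then lam else 0) * (y * (x * z))
       + (if a < c then lam else 0) * ((if a = b' then lam else 0) * (x * z) + z + (if b' < a then lam else 0) * (x * z))
       + ((if a < b' then lam else 0) * (x * (y * z) + (if a < c then lam else 0) * (y * z))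
       + (if a < b' then lam else 0) * ((if b' < c then lam else 0) * (x * z + (if a < b' then lam else 0) * z)))
     = y * (x * (y * z)) + (if a < b' then lam else 0) * (x * (y * z))
       + (if a < c then lam else 0) * ((if b' = c then lam else 0) * (y * z) + z + (if c < b' then lam else 0) * (y * z))
       + ((if b' < c then lam else 0) * (y * (x * z) + (if a < c then lam else 0) * (x * z))
       + (if b' < c then lam else 0) * ((if a < b' then lam else 0) * (y * z + (if b' < c then lam else 0) * z)))"
  shows "x * (y * (x * z)) - y * (x * (y * z)) = 0"
proof -
  note D = sub_lem[OF LR[unfolded add.assoc]]
  show ?thesis unfolding D
    by (cases "a < b'"; cases "b' < a"; cases "b' < c"; cases "c < b'"; cases "a < c"; simp add: algebra_simps)
qed

locale shoji =
  fixes phi :: "'r::idom \<Rightarrow> 'a::ring_1"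
    and n r :: nat and q :: 'r and u :: "nat \<Rightarrow> 'r"
    and t T :: "nat \<Rightarrow> 'a"
  assumes n2: "n \<ge> 2" and r1: "r \<ge> 1"
    and qinv: "invertible_R q" and dinv: "invertible_R (Delta r u)"
    and alg: "alg_struct phi"
    and rels: "shoji_rels phi n r q u t T"
begin

lemma phi_one[simp]: "phi 1 = 1" using alg unfolding alg_struct_def by blast
lemma phi_add: "phi (x + y) = phi x + phi y" using alg unfolding alg_struct_def by blast
lemma phi_mult: "phi (x * y) = phi x * phi y" using alg unfolding alg_struct_def by blast
lemma phi_c: "phi x * a = a * phi x" using alg unfolding alg_struct_def by blast
lemma phi_zero[simp]: "phi 0 = 0"
  using phi_add[of 0 0] by simp
lemma phi_uminus: "phi (- x) = - phi x"
  using phi_add[of x "-x"] by (simp add: eq_neg_iff_add_eq_0 add.commute)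
lemma phi_diff: "phi (x - y) = phi x - phi y"
  using phi_add[of x "-y"] phi_uminus[of y] by simp
lemma phi_sum: "phi (sum f A) = (\<Sum>a\<in>A. phi (f a))"
  by (induction A rule: infinite_finite_induct) (auto simp: phi_add)

lemma R1: "\<forall>i\<in>{1..n-1}. (T i - phi q) * (T i + phi (rinv q)) = 0"
  and R2: "\<forall>i\<in>{1..n}. prod_list (map (\<lambda>c. t i - phi (u c)) [1..<r+1]) = 0"
  and R3: "\<forall>i\<in>{1..n-2}. T i * T (i+1) * T i = T (i+1) * T i * T (i+1)"
  and R4: "\<forall>i\<in>{1..n-1}. \<forall>j\<in>{1..n-1}. (i > j + 1 \<or> j > i + 1) \<longrightarrow> T i * T j = T j * T i"
  and R5: "\<forall>i\<in>{1..n}. \<forall>j\<in>{1..n}. t i * t j = t j * t i"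
  and R6: "\<forall>j\<in>{1..n-1}. \<forall>k\<in>{1..n}. k \<noteq> j \<and> k \<noteq> j + 1 \<longrightarrow> T j * t k = t k * T j"
  and R7: "\<forall>j\<in>{2..n}. T (j-1) * t j = t (j-1) * T (j-1) + corr phi r q u t j"
  and R8: "\<forall>j\<in>{2..n}. T (j-1) * t (j-1) = t j * T (j-1) - corr phi r q u t j"
  using rels unfolding shoji_rels_def by blast+

lemma peval_sum: "degree p < N \<Longrightarrow> peval phi p x = (\<Sum>k<N. phi (coeff p k) * x^k)"
  unfolding peval_def
  by (rule sum.mono_neutral_left) (auto simp: coeff_eq_0)

lemma peval_add: "peval phi (p + p2) x = peval phi p x + peval phi p2 x"
proof -
  define N where "N = Suc (degree p + degree p2)"
  have "degree (p+p2) < N" using degree_add_le_max[of p p2] unfolding N_def by linarith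
  moreover have "degree p < N" "degree p2 < N" unfolding N_def by auto
  ultimately show ?thesis by (simp add: peval_sum[of _ N] phi_add distrib_right sum.distrib)
qed

lemma peval_smult: "peval phi (smult a p) x = phi a * peval phi p x"
proof -
  define N where "N = Suc (degree p)"
  have "degree (smult a p) < N" "degree p < N" unfolding N_def by auto
  then show ?thesis by (simp add: peval_sum[of _ N] phi_mult sum_distrib_left mult.assoc)
qed

lemma peval_pCons: "peval phi (pCons a p) x = phi a + x * peval phi p x"
proof -
  define N where "N = Suc (degree p)"
  have d1: "degree (pCons a p) < Suc N" using degree_pCons_le[of a p] unfolding N_def by linarith
  have d2: "degree p < N" unfolding N_def by auto
  have "peval phi (pCons a p) x = (\<Sum>k<Suc N. phi (coeff (pCons a p) k) * x^k)"
    by (rule peval_sum[OF d1])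
  also have "\<dots> = phi a + (\<Sum>k<N. phi (coeff p k) * x^Suc k)"
    by (simp only: sum.lessThan_Suc_shift coeff_pCons_0 coeff_pCons_Suc power_0 mult_1_right)
  also have "(\<Sum>k<N. phi (coeff p k) * x^Suc k) = (\<Sum>k<N. x * (phi (coeff p k) * x^k))"
    by (rule sum.cong) (auto simp: mult.assoc[symmetric], metis mult.assoc phi_c)
  also have "\<dots> = x * peval phi p x" by (simp add: peval_sum[OF d2] sum_distrib_left)
  finally show ?thesis .
qed

lemma peval_0[simp]: "peval phi 0 x = 0" by (simp add: peval_def)

lemma peval_mult: "peval phi (p * p2) x = peval phi p x * peval phi p2 x"
proof (induction p rule: pCons_induct)
  case 0 then show ?case by simp
next
  case (pCons a p)
  have "pCons a p * p2 = smult a p2 + pCons 0 (p * p2)" by simp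
  then have "peval phi (pCons a p * p2) x = phi a * peval phi p2 x + x * peval phi (p * p2) x"
    by (simp add: peval_add peval_smult peval_pCons)
  then show ?case by (simp add: pCons.IH peval_pCons distrib_right mult.assoc)
qed

lemma peval_const: "peval phi [:c:] x = phi c"
  by (simp add: peval_pCons)

lemma peval_one[simp]: "peval phi 1 x = 1"
  using peval_const[of 1 x] by (simp add: one_pCons)

lemma peval_lin: "peval phi [:a, 1:] x = phi a + x"
  by (simp add: peval_pCons)

lemma peval_diff: "peval phi (p - p2) x = peval phi p x - peval phi p2 x"
  using peval_add[of p "-p2" x] peval_smult[of "-1" p2 x] by (simp add: phi_uminus)

lemma peval_sum_set: "peval phi (sum f A) x = (\<Sum>a\<in>A. peval phi (f a) x)"
  by (induction A rule: infinite_finite_induct) (auto simp: peval_add)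

lemma peval_prod_list: "peval phi (prod_list (map f xs)) x = prod_list (map (\<lambda>a. peval phi (f a) x) xs)"
  by (induction xs) (auto simp: peval_mult)

lemma Delta_dvd: "Delta r u dvd 1"
  using dinv unfolding invertible_R_def by (metis dvdI)

lemma diff_dvd1: assumes "i \<in> {1..r}" "j \<in> {1..r}" "i \<noteq> j" shows "(u i - u j) dvd 1"
proof -
  have *: "(u a - u b) dvd 1" if "a \<in> {1..r}" "b \<in> {1..<a}" for a b
  proof -
    have "(u a - u b) dvd (\<Prod>j\<in>{1..<a}. (u a - u j))" using that by (intro dvd_prodI) auto
    also have "\<dots> dvd Delta r u" unfolding Delta_def using that by (intro dvd_prodI) auto
    finally show ?thesis using Delta_dvd by (rule dvd_trans)
  qed
  show ?thesis
  proof (cases "j < i")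
    case True then show ?thesis using * assms by auto
  next
    case False
    then have "(u j - u i) dvd 1" using * assms by auto
    moreover have "u i - u j = - (u j - u i)" by simp
    ultimately show ?thesis using minus_dvd_iff[of "u j - u i" 1] by simp
  qed
qed

lemma rinv_diff: "i \<in> {1..r} \<Longrightarrow> j \<in> {1..r} \<Longrightarrow> i \<noteq> j \<Longrightarrow> (u i - u j) * rinv (u i - u j) = 1"
  using diff_dvd1 rinv_mult by blast

lemma u_inj: "inj_on u {1..r}"
proof (rule inj_onI)
  fix i j assume "i \<in> {1..r}" "j \<in> {1..r}" "u i = u j"
  then show "i = j" using diff_dvd1[of i j] by (metis diff_self dvd_0_left_iff zero_neq_one)
qed

lemma comm_prod_list: "(\<And>y. y \<in> set ys \<Longrightarrow> z * y = y * z) \<Longrightarrow> z * prod_list ys = prod_list ys * z"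
proof (induction ys)
  case Nil then show ?case by simp
next
  case (Cons y ys)
  have "z * prod_list (y # ys) = (z * y) * prod_list ys" by (simp add: mult.assoc)
  also have "\<dots> = y * (z * prod_list ys)" using Cons by (simp add: mult.assoc)
  also have "\<dots> = prod_list (y # ys) * z" using Cons by (simp add: mult.assoc)
  finally show ?case .
qed

definition E :: "nat \<Rightarrow> nat \<Rightarrow> 'a" where
  "E i c = prod_list (map (\<lambda>j. (t i - phi (u j)) * phi (rinv (u c - u j))) (filter (\<lambda>j. j \<noteq> c) [1..<r+1]))"

definition Lp :: "nat \<Rightarrow> 'r poly" where
  "Lp c = prod_list (map (\<lambda>j. smult (rinv (u c - u j)) [:- u j, 1:]) (filter (\<lambda>j. j \<noteq> c) [1..<r+1]))"

lemma E_comm: assumes "z * t i = t i * z" shows "z * E i c = E i c * z"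
  unfolding E_def
proof (rule comm_prod_list)
  fix y assume "y \<in> set (map (\<lambda>j. (t i - phi (u j)) * phi (rinv (u c - u j))) (filter (\<lambda>j. j \<noteq> c) [1..<r+1]))"
  then obtain j where y: "y = (t i - phi (u j)) * phi (rinv (u c - u j))" by auto
  have "z * y = (z * t i - z * phi (u j)) * phi (rinv (u c - u j))" unfolding y
    by (simp add: mult.assoc[symmetric] right_diff_distrib)
  also have "\<dots> = (t i * z - phi (u j) * z) * phi (rinv (u c - u j))"
    using assms by (simp add: phi_c)
  also have "\<dots> = (t i - phi (u j)) * (z * phi (rinv (u c - u j)))"
    by (simp add: left_diff_distrib mult.assoc)
  also have "\<dots> = y * z" unfolding y by (simp add: phi_c mult.assoc)
  finally show "z * y = y * z" .
qed

lemma lin_aux: "phi b * (phi (- a) + x) = (x - phi a) * phi b"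
proof -
  have "phi b * (phi (- a) + x) = (phi (- a) + x) * phi b" by (rule phi_c)
  then show ?thesis by (simp add: phi_uminus)
qed

lemma peval_E: "peval phi (Lp c) (t i) = E i c"
  unfolding Lp_def E_def peval_prod_list
  by (intro arg_cong[where f=prod_list] map_cong refl)
     (simp only: peval_smult peval_lin lin_aux)

lemma set_fl: "set (filter (\<lambda>j. j \<noteq> c) [1..<r+1]) = {1..r} - {c}" by auto

lemma prod_list_ones: "(\<And>x. x \<in> set xs \<Longrightarrow> f x = 1) \<Longrightarrow> prod_list (map f xs) = 1"
  by (induction xs) auto

lemma poly_prod_list': "poly (prod_list (map f xs)) x = prod_list (map (\<lambda>a. poly (f a) x) xs)"
  by (induction xs) auto

lemma poly_Lp_gen: "poly (Lp c) x = prod_list (map (\<lambda>j. rinv (u c - u j) * (x - u j)) (filter (\<lambda>j. j \<noteq> c) [1..<r+1]))"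
  unfolding Lp_def poly_prod_list'
  by (intro arg_cong[where f=prod_list] map_cong refl) (simp add: algebra_simps)

lemma poly_Lp: assumes "c \<in> {1..r}" "e \<in> {1..r}"
  shows "poly (Lp c) (u e) = (if e = c then 1 else 0)"
proof (cases "e = c")
  case True
  have "poly (Lp c) (u e) = 1" unfolding poly_Lp_gen
  proof (intro prod_list_ones)
    fix x assume "x \<in> set (filter (\<lambda>j. j \<noteq> c) [1..<r+1])"
    then have "x \<in> {1..r}" "x \<noteq> c" unfolding set_fl by auto
    then show "rinv (u c - u x) * (u e - u x) = 1" using rinv_diff[of c x] assms True by (simp add: mult.commute)
  qed
  then show ?thesis using True by simp
next
  case False
  have "e \<in> set (filter (\<lambda>j. j \<noteq> c) [1..<r+1])" unfolding set_fl using False assms by auto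
  then have "rinv (u c - u e) * (u e - u e) \<in> set (map (\<lambda>j. rinv (u c - u j) * (u e - u j)) (filter (\<lambda>j. j \<noteq> c) [1..<r+1]))"
    unfolding set_map by (rule imageI)
  then have "poly (Lp c) (u e) = 0" unfolding poly_Lp_gen prod_list_zero_iff by simp
  then show ?thesis using False by simp
qed

lemma degree_Lp: assumes "c \<in> {1..r}" shows "degree (Lp c) \<le> r - 1"
proof -
  have "degree (Lp c) \<le> sum_list (map degree (map (\<lambda>j. smult (rinv (u c - u j)) [:- u j, 1:]) (filter (\<lambda>j. j \<noteq> c) [1..<r+1])))"
    unfolding Lp_def by (rule degree_prod_list_le)
  also have "\<dots> = (\<Sum>j\<in>{1..r} - {c}. degree (smult (rinv (u c - u j)) [:- u j, 1:]))"
    by (simp only: map_map sum_list_distinct_conv_sum_set[OF distinct_filter[OF distinct_upt]] set_fl o_def)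
  also have "\<dots> \<le> (\<Sum>j\<in>{1..r} - {c}. 1)"
    by (intro sum_mono) (rule order_trans[OF degree_smult_le], simp)
  also have "\<dots> = r - 1" using assms by simp
  finally show ?thesis .
qed

lemma sum_Lp: "(\<Sum>c\<in>{1..r}. Lp c) = 1"
proof (rule poly_eqI_degree[where A="u ` {1..r}"])
  have card: "card (u ` {1..r}) = r" using u_inj by (simp add: card_image)
  fix x assume "x \<in> u ` {1..r}"
  then obtain e where e: "e \<in> {1..r}" "x = u e" by auto
  have "poly (\<Sum>c\<in>{1..r}. Lp c) x = (\<Sum>c\<in>{1..r}. if e = c then 1 else 0)"
    unfolding poly_sum e(2) using e(1) by (intro sum.cong refl) (simp add: poly_Lp)
  also have "\<dots> = 1" using e(1) by simp
  finally show "poly (\<Sum>c\<in>{1..r}. Lp c) x = poly 1 x" by simp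
next
  have card: "card (u ` {1..r}) = r" using u_inj by (simp add: card_image)
  have "degree (\<Sum>c\<in>{1..r}. Lp c) \<le> r - 1" by (rule degree_sum_le, simp, rule degree_Lp, simp)
  then show "degree (\<Sum>c\<in>{1..r}. Lp c) < card (u ` {1..r})" using card r1 by linarith
  show "degree (1::'r poly) < card (u ` {1..r})" using card r1 by simp
qed

definition Zp :: "'r poly" where "Zp = prod_list (map (\<lambda>e. [:- u e, 1:]) [1..<r+1])"

lemma peval_Z: "i \<in> {1..n} \<Longrightarrow> peval phi Zp (t i) = 0"
proof -
  assume i: "i \<in> {1..n}"
  have "peval phi Zp (t i) = prod_list (map (\<lambda>c. t i - phi (u c)) [1..<r+1])"
    unfolding Zp_def peval_prod_list
    by (intro arg_cong[where f=prod_list] map_cong refl)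
       (simp add: peval_lin phi_uminus)
  also have "\<dots> = 0" using R2 i by blast
  finally show ?thesis .
qed

lemma prod_list_smult: "prod_list (map (\<lambda>j. smult (b j) (p j)) xs) = smult (prod_list (map b xs)) (prod_list (map p xs))"
  by (induction xs) (auto simp: mult_smult_left mult_smult_right mult.commute)

lemma lin_Lp: assumes "c \<in> {1..r}"
  shows "[:- u c, 1:] * Lp c = smult (prod_list (map (\<lambda>j. rinv (u c - u j)) (filter (\<lambda>j. j \<noteq> c) [1..<r+1]))) Zp"
proof -
  have "[:- u c, 1:] * prod_list (map (\<lambda>j. [:- u j, 1:]) (filter (\<lambda>j. j \<noteq> c) [1..<r+1])) = Zp"
  proof -
    have "prod_list (map (\<lambda>j. [:- u j, 1:]) (filter (\<lambda>j. j \<noteq> c) [1..<r+1])) = (\<Prod>j\<in>{1..r}-{c}. [:- u j, 1:])"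
      by (simp only: prod.distinct_set_conv_list[OF distinct_filter[OF distinct_upt], symmetric] set_fl)
    moreover have "Zp = (\<Prod>j\<in>{1..r}. [:- u j, 1:])"
    proof -
      have "set [1..<r+1] = {1..r}" by auto
      then show ?thesis
        unfolding Zp_def by (simp only: prod.distinct_set_conv_list[OF distinct_upt, symmetric])
    qed
    ultimately show ?thesis using assms by (simp add: prod.remove)
  qed
  then show ?thesis unfolding Lp_def prod_list_smult by (simp add: mult_smult_right)
qed

lemma tE: assumes "i \<in> {1..n}" "c \<in> {1..r}" shows "t i * E i c = phi (u c) * E i c"
proof -
  have "peval phi ([:- u c, 1:] * Lp c) (t i) = 0"
    by (simp only: lin_Lp[OF assms(2)] peval_smult peval_Z[OF assms(1)] mult_zero_right)
  then have "(phi (- u c) + t i) * E i c = 0" by (simp only: peval_mult peval_lin peval_E)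
  then have "(t i - phi (u c)) * E i c = 0" by (simp add: phi_uminus)
  then show ?thesis by (simp add: left_diff_distrib)
qed

lemma poly_act: assumes "i \<in> {1..n}" "c \<in> {1..r}"
  shows "peval phi p (t i) * E i c = phi (poly p (u c)) * E i c"
proof (induction p rule: pCons_induct)
  case 0 then show ?case by simp
next
  case (pCons a p)
  have "peval phi (pCons a p) (t i) * E i c = phi a * E i c + t i * (peval phi p (t i) * E i c)"
    by (simp add: peval_pCons distrib_right mult.assoc)
  also have "\<dots> = phi a * E i c + phi (poly p (u c)) * (t i * E i c)"
    by (simp add: pCons.IH, metis phi_c mult.assoc)
  also have "\<dots> = phi (poly (pCons a p) (u c)) * E i c"
    using assms by (simp add: tE phi_add phi_mult distrib_right mult.assoc[symmetric], metis phi_c)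
  finally show ?case .
qed

lemma EE: assumes "i \<in> {1..n}" "c \<in> {1..r}" "d \<in> {1..r}"
  shows "E i d * E i c = (if d = c then E i c else 0)"
proof -
  have "E i d * E i c = phi (poly (Lp d) (u c)) * E i c"
    using poly_act[OF assms(1,2), of "Lp d"] by (simp add: peval_E)
  then show ?thesis using assms poly_Lp[of d c] by auto
qed

lemma sumE: "(\<Sum>c\<in>{1..r}. E i c) = 1"
proof -
  have "(\<Sum>c\<in>{1..r}. E i c) = (\<Sum>c\<in>{1..r}. peval phi (Lp c) (t i))" by (simp only: peval_E)
  also have "\<dots> = peval phi (\<Sum>c\<in>{1..r}. Lp c) (t i)" by (rule peval_sum_set[symmetric])
  also have "\<dots> = 1" by (simp only: sum_Lp peval_one)
  finally show ?thesis .
qed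

lemma Fpoly_eq: assumes "c \<in> {1..r}" shows "Fpoly r u c = smult (Delta r u) (Lp c)"
  unfolding Fpoly_def
proof (rule the_equality)
  show "degree (smult (Delta r u) (Lp c)) \<le> r - 1 \<and>
    (\<forall>c'\<in>{1..r}. poly (smult (Delta r u) (Lp c)) (u c') = (if c = c' then Delta r u else 0))"
    using assms order_trans[OF degree_smult_le[of "Delta r u" "Lp c"] degree_Lp[OF assms]] by (auto simp: poly_Lp)
  fix p assume p: "degree p \<le> r - 1 \<and> (\<forall>c'\<in>{1..r}. poly p (u c') = (if c = c' then Delta r u else 0))"
  have card: "card (u ` {1..r}) = r" using u_inj by (simp add: card_image)
  show "p = smult (Delta r u) (Lp c)"
  proof (rule poly_eqI_degree[where A="u ` {1..r}"])
    fix x assume "x \<in> u ` {1..r}"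
    then obtain e where e: "e \<in> {1..r}" "x = u e" by auto
    show "poly p x = poly (smult (Delta r u) (Lp c)) x" using p e assms by (auto simp: poly_Lp)
  next
    show "degree p < card (u ` {1..r})" using p card r1 by linarith
    show "degree (smult (Delta r u) (Lp c)) < card (u ` {1..r})"
      using card r1 order_trans[OF degree_smult_le[of "Delta r u" "Lp c"] degree_Lp[OF assms]] by linarith
  qed
qed

lemma peval_F: "c \<in> {1..r} \<Longrightarrow> peval phi (Fpoly r u c) (t j) = phi (Delta r u) * E j c"
  by (simp add: Fpoly_eq peval_smult peval_E)




lemma phi_pull: "x * (phi b * y) = phi b * (x * y)"
  by (metis mult.assoc phi_c)

definition lam :: 'a where "lam = phi (q - rinv q)"

lemma corr_eq: "corr phi r q u t j = (\<Sum>c1\<in>{1..r}. \<Sum>c2\<in>{c1<..r}.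
      phi ((u c2 - u c1) * (q - rinv q)) * E (j-1) c1 * E j c2)"
  unfolding corr_def
proof (intro sum.cong refl)
  fix c1 c2 assume c1: "c1 \<in> {1..r}" and c2: "c2 \<in> {c1<..r}"
  have D: "rinv ((Delta r u)^2) * Delta r u * Delta r u = 1"
  proof -
    have "(Delta r u)^2 dvd 1" using Delta_dvd mult_dvd_mono[of "Delta r u" 1 "Delta r u" 1] by (simp add: power2_eq_square)
    then have "(Delta r u)^2 * rinv ((Delta r u)^2) = 1" by (rule rinv_mult)
    then show ?thesis by (simp add: power2_eq_square ac_simps)
  qed
  let ?a = "(u c2 - u c1) * (q - rinv q)"
  have "phi (rinv ((Delta r u)^2) * (u c2 - u c1) * (q - rinv q)) * peval phi (Fpoly r u c1) (t (j - 1)) * peval phi (Fpoly r u c2) (t j)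
     = phi (rinv ((Delta r u)^2) * ?a) * (phi (Delta r u) * E (j-1) c1) * (phi (Delta r u) * E j c2)"
  proof -
    have c2': "c2 \<in> {1..r}" using c1 c2 by auto
    show ?thesis by (simp only: peval_F[OF c1] peval_F[OF c2'] mult.assoc)
  qed
  also have "\<dots> = phi (rinv ((Delta r u)^2) * ?a * Delta r u * Delta r u) * E (j-1) c1 * E j c2"
  proof -
    have "E (j-1) c1 * (phi (Delta r u) * E j c2) = phi (Delta r u) * (E (j-1) c1 * E j c2)" by (rule phi_pull)
    then show ?thesis by (simp add: mult.assoc phi_mult)
  qed
  also have "rinv ((Delta r u)^2) * ?a * Delta r u * Delta r u = ?a"
  proof -
    have "rinv ((Delta r u)^2) * ?a * Delta r u * Delta r u = (rinv ((Delta r u)^2) * Delta r u * Delta r u) * ?a"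
      by (simp only: ac_simps)
    then show ?thesis using D by simp
  qed
  finally show "phi (rinv ((Delta r u)^2) * (u c2 - u c1) * (q - rinv q)) * peval phi (Fpoly r u c1) (t (j - 1)) * peval phi (Fpoly r u c2) (t j)
     = phi ((u c2 - u c1) * (q - rinv q)) * E (j-1) c1 * E j c2" .
qed

lemma tt: "i \<in> {1..n} \<Longrightarrow> j \<in> {1..n} \<Longrightarrow> t i * t j = t j * t i"
  using R5 by blast

lemma tE_comm: "i \<in> {1..n} \<Longrightarrow> j \<in> {1..n} \<Longrightarrow> t j * E i c = E i c * t j"
  by (rule E_comm) (simp add: tt)

lemma EE_comm: "i \<in> {1..n} \<Longrightarrow> j \<in> {1..n} \<Longrightarrow> E j d * E i c = E i c * E j d"
  by (rule E_comm) (simp add: tE_comm)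

definition K :: "(nat \<Rightarrow> nat) set" where "K = PiE {1..n} (\<lambda>_. {1..r})"

definition P :: "(nat \<Rightarrow> nat) \<Rightarrow> nat list \<Rightarrow> 'a" where
  "P k xs = prod_list (map (\<lambda>i. E i (k i)) xs)"

definition b :: "(nat \<Rightarrow> nat) \<Rightarrow> 'a" where "b k = P k [1..<n+1]"

lemma bk_eq: "bk phi n r u t k = b k"
  unfolding bk_def b_def P_def E_def by simp

lemma P_comm: assumes "set xs \<subseteq> {1..n}" "\<And>i. i \<in> set xs \<Longrightarrow> z * E i (k i) = E i (k i) * z"
  shows "z * P k xs = P k xs * z"
  unfolding P_def using assms by (intro comm_prod_list) auto

lemma b_comm: assumes "\<And>i. i \<in> {1..n} \<Longrightarrow> z * E i (k i) = E i (k i) * z"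
  shows "z * b k = b k * z"
  unfolding b_def using assms by (intro P_comm) auto

lemma tb: "j \<in> {1..n} \<Longrightarrow> t j * b k = b k * t j"
  by (rule b_comm) (simp add: tE_comm)

lemma Eb: "j \<in> {1..n} \<Longrightarrow> E j c * b k = b k * E j c"
  by (rule b_comm) (simp add: EE_comm)

lemma PE: assumes "k \<in> K" "m \<in> set xs" "distinct xs" "set xs \<subseteq> {1..n}" "c \<in> {1..r}"
  shows "P k xs * E m c = (if k m = c then P k xs else 0)"
  using assms(2-4)
proof (induction xs)
  case Nil then show ?case by simp
next
  case (Cons y ys)
  have km: "k m \<in> {1..r}" "m \<in> {1..n}" using assms(1) Cons.prems unfolding K_def by auto
  have "P k (y # ys) * E m c = E y (k y) * (P k ys * E m c)" unfolding P_def by (simp add: mult.assoc)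
  also have "\<dots> = (if k m = c then P k (y # ys) else 0)"
  proof (cases "y = m")
    case True
    have "P k ys * E m c = E m c * P k ys"
      using Cons.prems km by (intro P_comm[symmetric]) (auto simp: EE_comm)
    then have "E y (k y) * (P k ys * E m c) = (E m (k m) * E m c) * P k ys" using True by (simp add: mult.assoc)
    also have "\<dots> = (if k m = c then P k (y # ys) else 0)" using True km assms(5) by (simp add: EE P_def)
    finally show ?thesis .
  next
    case False
    then show ?thesis using Cons by (simp add: P_def)
  qed
  finally show ?case .
qed

lemma bE: "k \<in> K \<Longrightarrow> m \<in> {1..n} \<Longrightarrow> c \<in> {1..r} \<Longrightarrow> b k * E m c = (if k m = c then b k else 0)"
  unfolding b_def by (rule PE) auto

lemma bP: assumes "k' \<in> K" "set xs \<subseteq> {1..n}" "\<forall>i\<in>set xs. k i \<in> {1..r}"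
  shows "b k' * P k xs = (if \<forall>i\<in>set xs. k' i = k i then b k' else 0)"
  using assms(2,3)
proof (induction xs rule: rev_induct)
  case Nil then show ?case by (simp add: P_def)
next
  case (snoc y ys)
  have "b k' * P k (ys @ [y]) = (b k' * P k ys) * E y (k y)" unfolding P_def by (simp add: mult.assoc)
  also have "\<dots> = (if \<forall>i\<in>set (ys @ [y]). k' i = k i then b k' else 0)"
    using snoc by (auto simp: bE[OF assms(1)])
  finally show ?case .
qed

lemma bb: assumes "k' \<in> K" "k \<in> K" shows "b k' * b k = (if k' = k then b k else 0)"
proof -
  have "b k' * b k = (if \<forall>i\<in>{1..n}. k' i = k i then b k' else 0)"
  proof -
    have s: "set [1..<n+1] = {1..n}" by auto
    have "b k' * P k [1..<n+1] = (if \<forall>i\<in>set [1..<n+1]. k' i = k i then b k' else 0)"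
      using assms(2) unfolding K_def by (intro bP assms(1)) (auto simp: PiE_iff)
    then show ?thesis unfolding b_def[of k] s .
  qed
  moreover have "(\<forall>i\<in>{1..n}. k' i = k i) \<longleftrightarrow> k' = k"
  proof
    assume h: "\<forall>i\<in>{1..n}. k' i = k i"
    show "k' = k"
    proof
      fix x show "k' x = k x"
      proof (cases "x \<in> {1..n}")
        case True then show ?thesis using h by blast
      next
        case False then show ?thesis using assms unfolding K_def using PiE_arb[of k'] PiE_arb[of k] by metis
      qed
    qed
  qed simp
  ultimately show ?thesis by auto
qed

lemma sum_P: "(\<Sum>k\<in>PiE {1..N} (\<lambda>_. {1..r}). P k [1..<N+1]) = 1"
proof (induction N)
  case 0 then show ?case by (simp add: P_def)
next
  case (Suc N)
  have ins: "{1..Suc N} = insert (Suc N) {1..N}" by auto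
  have "(\<Sum>k\<in>PiE {1..Suc N} (\<lambda>_. {1..r}). P k [1..<Suc N+1])
     = (\<Sum>(y, g)\<in>{1..r} \<times> PiE {1..N} (\<lambda>_. {1..r}). P (g(Suc N := y)) [1..<Suc N+1])"
    unfolding ins PiE_insert_eq
    by (subst sum.reindex) (auto intro!: inj_combinator simp: o_def case_prod_beta)
  also have "\<dots> = (\<Sum>y\<in>{1..r}. \<Sum>g\<in>PiE {1..N} (\<lambda>_. {1..r}). P g [1..<N+1] * E (Suc N) y)"
    unfolding sum.cartesian_product[symmetric]
  proof (intro sum.cong refl)
    fix y g
    have m: "map (\<lambda>i. E i ((g(Suc N := y)) i)) [1..<N+1] = map (\<lambda>i. E i (g i)) [1..<N+1]" by auto
    have u: "[1..<Suc N+1] = [1..<N+1] @ [Suc N]" by simp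
    show "P (g(Suc N := y)) [1..<Suc N+1] = P g [1..<N+1] * E (Suc N) y"
      unfolding P_def u map_append prod_list.append m by simp
  qed
  also have "\<dots> = (\<Sum>y\<in>{1..r}. E (Suc N) y)"
    by (simp only: sum_distrib_right[symmetric] Suc.IH mult_1_left)
  also have "\<dots> = 1" by (rule sumE)
  finally show ?case .
qed

lemma sum_b: "(\<Sum>k\<in>K. b k) = 1"
  unfolding K_def b_def by (rule sum_P)

lemma zero_by_blocks: assumes "\<And>k. k \<in> K \<Longrightarrow> z * b k = 0" shows "z = 0"
proof -
  have "z = z * (\<Sum>k\<in>K. b k)" by (simp add: sum_b)
  also have "\<dots> = 0" by (simp add: sum_distrib_left assms)
  finally show ?thesis .
qed

definition B :: "nat \<Rightarrow> 'a" where "B i = Bp phi n r q u t i (i+1)"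
definition g :: "nat \<Rightarrow> 'a" where "g i = gen phi n r q u t T i"

lemma g_def': "g i = T i + B i" unfolding g_def gen_def B_def by simp

lemma finK: "finite K" unfolding K_def by (simp add: finite_PiE)

lemma lam_c: "lam * z = z * lam" unfolding lam_def by (rule phi_c)

lemma Bb: assumes "k \<in> K" shows "B i * b k = (if k i < k (i+1) then - lam * b k else 0)"
proof -
  have "B i * b k = phi (- (q - rinv q)) * (\<Sum>k'\<in>{k'\<in>K. k' i < k' (i+1)}. b k' * b k)"
    unfolding B_def Bp_def bk_eq K_def[symmetric] by (simp add: sum_distrib_right mult.assoc)
  also have "(\<Sum>k'\<in>{k'\<in>K. k' i < k' (i+1)}. b k' * b k) = (\<Sum>k'\<in>{k'\<in>K. k' i < k' (i+1)}. if k' = k then b k else 0)"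
    by (intro sum.cong refl) (simp add: bb assms)
  also have "\<dots> = (if k i < k (i+1) then b k else 0)"
    using finK assms by (simp add: sum.delta')
  finally show ?thesis by (auto simp: lam_def phi_diff algebra_simps)
qed

lemma comm_sum: fixes z :: 'a shows "(\<And>x. x \<in> A \<Longrightarrow> z * f x = f x * z) \<Longrightarrow> z * sum f A = sum f A * z"
proof -
  assume h: "\<And>x. x \<in> A \<Longrightarrow> z * f x = f x * z"
  have "z * sum f A = (\<Sum>x\<in>A. z * f x)" by (rule sum_distrib_left)
  also have "\<dots> = (\<Sum>x\<in>A. f x * z)" by (rule sum.cong) (simp_all add: h)
  also have "\<dots> = sum f A * z" by (rule sum_distrib_right[symmetric])
  finally show ?thesis .
qed

lemma comm_phi_prod: fixes z :: 'a shows "z * y = y * z \<Longrightarrow> z * (phi a * y) = (phi a * y) * z"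
proof -
  assume h: "z * y = y * z"
  have "z * (phi a * y) = (z * phi a) * y" by (simp add: mult.assoc)
  also have "\<dots> = phi a * (z * y)" using phi_c[of a z] by (simp only: mult.assoc[symmetric])
  also have "\<dots> = (phi a * y) * z" using h by (simp add: mult.assoc)
  finally show ?thesis .
qed

lemma B_comm_t: "m \<in> {1..n} \<Longrightarrow> B i * t m = t m * B i"
  unfolding B_def Bp_def bk_eq
  by (rule sym, rule comm_phi_prod, rule comm_sum, rule tb)

lemma tb_eig: assumes "k \<in> K" "m \<in> {1..n}" shows "t m * b k = phi (u (k m)) * b k"
proof -
  have km: "k m \<in> {1..r}" using assms unfolding K_def by auto
  have "t m * b k = t m * (b k * E m (k m))" using bE[OF assms km] by simp
  also have "\<dots> = b k * (t m * E m (k m))" using tb[OF assms(2)] by (simp add: mult.assoc[symmetric])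
  also have "\<dots> = phi (u (k m)) * (b k * E m (k m))" using tE[OF assms(2) km] by (simp add: mult.assoc[symmetric], metis phi_c)
  also have "\<dots> = phi (u (k m)) * b k" using bE[OF assms km] by simp
  finally show ?thesis .
qed

lemma corr_b: assumes "k \<in> K" "i \<in> {1..n-1}"
  shows "corr phi r q u t (i+1) * b k = (if k i < k (i+1) then phi ((u (k (i+1)) - u (k i)) * (q - rinv q)) * b k else 0)"
proof -
  have ki: "k i \<in> {1..r}" "k (i+1) \<in> {1..r}" "i \<in> {1..n}" "i+1 \<in> {1..n}" using assms unfolding K_def by auto
  have "corr phi r q u t (i+1) * b k = (\<Sum>c1\<in>{1..r}. \<Sum>c2\<in>{c1<..r}.
      phi ((u c2 - u c1) * (q - rinv q)) * (E i c1 * E (i+1) c2 * b k))"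
    unfolding corr_eq by (simp add: sum_distrib_right mult.assoc)
  also have "\<dots> = (\<Sum>c1\<in>{1..r}. \<Sum>c2\<in>{c1<..r}.
      if c1 = k i then (if c2 = k (i+1) then phi ((u (k (i+1)) - u (k i)) * (q - rinv q)) * b k else 0) else 0)"
  proof (intro sum.cong refl)
    fix c1 c2 assume c: "c1 \<in> {1..r}" "c2 \<in> {c1<..r}"
    have e1: "E (i+1) c2 * b k = b k * E (i+1) c2" using ki by (intro Eb) auto
    have e2: "E i c1 * b k = b k * E i c1" using ki by (intro Eb) auto
    have "E i c1 * E (i+1) c2 * b k = E i c1 * (b k * E (i+1) c2)" by (simp only: mult.assoc e1)
    also have "\<dots> = b k * E i c1 * E (i+1) c2" by (simp only: mult.assoc[symmetric] e2)
    finally have "E i c1 * E (i+1) c2 * b k = b k * E i c1 * E (i+1) c2" .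
    also have "\<dots> = (if c1 = k i then (if c2 = k (i+1) then b k else 0) else 0)"
      using c ki by (auto simp: bE[OF assms(1)])
    finally show "phi ((u c2 - u c1) * (q - rinv q)) * (E i c1 * E (i+1) c2 * b k) =
      (if c1 = k i then (if c2 = k (i+1) then phi ((u (k (i+1)) - u (k i)) * (q - rinv q)) * b k else 0) else 0)"
      by auto
  qed
  also have "\<dots> = (if k i < k (i+1) then phi ((u (k (i+1)) - u (k i)) * (q - rinv q)) * b k else 0)"
  proof -
    let ?X = "phi ((u (k (i+1)) - u (k i)) * (q - rinv q)) * b k"
    have "(\<Sum>c1\<in>{1..r}. \<Sum>c2\<in>{c1<..r}. if c1 = k i then (if c2 = k (i+1) then ?X else 0) else 0)
        = (\<Sum>c1\<in>{1..r}. if c1 = k i then (\<Sum>c2\<in>{c1<..r}. if c2 = k (i+1) then ?X else 0) else 0)"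
      by (rule sum.cong) auto
    also have "\<dots> = (\<Sum>c2\<in>{k i<..r}. if c2 = k (i+1) then ?X else 0)"
      using ki by (subst sum.delta) auto
    also have "\<dots> = (if k i < k (i+1) then ?X else 0)"
      using ki by (subst sum.delta) auto
    finally show ?thesis .
  qed
  finally show ?thesis .
qed

lemma phi_cc: "phi x * (phi y * z) = phi y * (phi x * z)"
  by (metis mult.assoc phi_c)

lemma tpull: "t m * (phi a * y) = phi a * (t m * y)" by (rule phi_pull)
lemma Bpull: "B m * (phi a * y) = phi a * (B m * y)" by (rule phi_pull)

lemma corr_lam: assumes "k \<in> K" "i \<in> {1..n-1}" "k i < k (i+1)"
  shows "corr phi r q u t (i+1) * b k = lam * (phi (u (k (i+1))) * b k) - lam * (phi (u (k i)) * b k)"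
proof -
  have e: "(u (k (i+1)) - u (k i)) * (q - rinv q) = (q - rinv q) * u (k (i+1)) - (q - rinv q) * u (k i)"
    by (simp add: algebra_simps)
  show ?thesis using assms(3) unfolding corr_b[OF assms(1,2)] e
    by (simp only: if_True phi_diff phi_mult left_diff_distrib mult.assoc lam_def)
qed

lemma Bb_true: "k \<in> K \<Longrightarrow> k i < k (i+1) \<Longrightarrow> B i * b k = - (lam * b k)"
  using Bb[of k i] by simp

lemma Bb_false: "k \<in> K \<Longrightarrow> \<not> k i < k (i+1) \<Longrightarrow> B i * b k = 0"
  using Bb[of k i] by simp

lemma corr_false: "k \<in> K \<Longrightarrow> i \<in> {1..n-1} \<Longrightarrow> \<not> k i < k (i+1) \<Longrightarrow> corr phi r q u t (i+1) * b k = 0"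
  using corr_b[of k i] by simp

lemma g_t1: assumes i: "i \<in> {1..n-1}" shows "g i * t (i+1) = t i * g i"
proof -
  have R7': "T i * t (i+1) = t i * T i + corr phi r q u t (i+1)"
  proof -
    have h: "i+1 \<in> {2..n}" using i by auto
    show ?thesis using bspec[OF R7 h] by simp
  qed
  have "(g i * t (i+1) - t i * g i) = 0"
  proof (rule zero_by_blocks)
    fix k assume k: "k \<in> K"
    have ii: "i \<in> {1..n}" "i+1 \<in> {1..n}" using i by auto
    have e: "B i * (t (i+1) * b k) = phi (u (k (i+1))) * (B i * b k)"
      by (simp only: tb_eig[OF k ii(2)] Bpull)
    have "g i * t (i+1) * b k = T i * t (i+1) * b k + B i * (t (i+1) * b k)"
      by (simp add: g_def' distrib_right mult.assoc)
    also have "\<dots> = t i * (T i * b k) + corr phi r q u t (i+1) * b k + phi (u (k (i+1))) * (B i * b k)"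
      by (simp only: R7' distrib_right e) (simp only: mult.assoc)
    finally have L: "g i * t (i+1) * b k = t i * (T i * b k) + corr phi r q u t (i+1) * b k + phi (u (k (i+1))) * (B i * b k)" .
    have Rt: "t i * g i * b k = t i * (T i * b k) + t i * (B i * b k)"
      by (simp add: g_def' distrib_left distrib_right mult.assoc)
    show "(g i * t (i+1) - t i * g i) * b k = 0"
    proof (cases "k i < k (i+1)")
      case True
      have "t i * (B i * b k) = - (lam * (phi (u (k i)) * b k))"
        unfolding Bb_true[OF k True] mult_minus_right lam_def tpull tb_eig[OF k ii(1)] ..
      moreover have "phi (u (k (i+1))) * (B i * b k) = - (lam * (phi (u (k (i+1))) * b k))"
        unfolding Bb_true[OF k True] mult_minus_right lam_def by (simp only: phi_cc)
      moreover note corr_lam[OF k i True]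
      ultimately show ?thesis using L Rt by (simp add: left_diff_distrib)
    next
      case False
      then show ?thesis using L Rt Bb_false[OF k False] corr_false[OF k i False] by (simp add: left_diff_distrib)
    qed
  qed
  then show ?thesis by simp
qed

lemma g_t2: assumes i: "i \<in> {1..n-1}" shows "g i * t i = t (i+1) * g i"
proof -
  have R8': "T i * t i = t (i+1) * T i - corr phi r q u t (i+1)"
  proof -
    have h: "i+1 \<in> {2..n}" using i by auto
    show ?thesis using bspec[OF R8 h] by simp
  qed
  have "(g i * t i - t (i+1) * g i) = 0"
  proof (rule zero_by_blocks)
    fix k assume k: "k \<in> K"
    have ii: "i \<in> {1..n}" "i+1 \<in> {1..n}" using i by auto
    have e: "B i * (t i * b k) = phi (u (k i)) * (B i * b k)"
      by (simp only: tb_eig[OF k ii(1)] Bpull)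
    have "g i * t i * b k = T i * t i * b k + B i * (t i * b k)"
      by (simp add: g_def' distrib_right mult.assoc)
    also have "\<dots> = t (i+1) * (T i * b k) - corr phi r q u t (i+1) * b k + phi (u (k i)) * (B i * b k)"
      by (simp only: R8' left_diff_distrib e) (simp only: mult.assoc)
    finally have L: "g i * t i * b k = t (i+1) * (T i * b k) - corr phi r q u t (i+1) * b k + phi (u (k i)) * (B i * b k)" .
    have Rt: "t (i+1) * g i * b k = t (i+1) * (T i * b k) + t (i+1) * (B i * b k)"
      by (simp add: g_def' distrib_left distrib_right mult.assoc)
    show "(g i * t i - t (i+1) * g i) * b k = 0"
    proof (cases "k i < k (i+1)")
      case True
      have "t (i+1) * (B i * b k) = - (lam * (phi (u (k (i+1))) * b k))"
        unfolding Bb_true[OF k True] mult_minus_right lam_def tpull tb_eig[OF k ii(2)] ..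
      moreover have "phi (u (k i)) * (B i * b k) = - (lam * (phi (u (k i)) * b k))"
        unfolding Bb_true[OF k True] mult_minus_right lam_def by (simp only: phi_cc)
      moreover note corr_lam[OF k i True]
      ultimately show ?thesis using L Rt by (simp add: left_diff_distrib)
    next
      case False
      then show ?thesis using L Rt Bb_false[OF k False] corr_false[OF k i False] by (simp add: left_diff_distrib)
    qed
  qed
  then show ?thesis by simp
qed

lemma g_t3: assumes i: "i \<in> {1..n-1}" and m: "m \<in> {1..n}" "m \<noteq> i" "m \<noteq> i+1"
  shows "g i * t m = t m * g i"
  using R6 i m B_comm_t[OF m(1), of i] by (simp add: g_def' distrib_left distrib_right)

lemma move_E: assumes "z * x = y * z" "\<And>a. z * phi a = phi a * z"
  shows "z * prod_list (map (\<lambda>j. (x - phi (a j)) * phi (be j)) ds) = prod_list (map (\<lambda>j. (y - phi (a j)) * phi (be j)) ds) * z"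
proof (induction ds)
  case Nil then show ?case by simp
next
  case (Cons d ds)
  have "z * ((x - phi (a d)) * phi (be d)) = (y - phi (a d)) * phi (be d) * z"
  proof -
    have "z * ((x - phi (a d)) * phi (be d)) = (z * x - z * phi (a d)) * phi (be d)"
      by (simp only: mult.assoc[symmetric] right_diff_distrib)
    also have "\<dots> = (y * z - phi (a d) * z) * phi (be d)" using assms by simp
    also have "\<dots> = (y - phi (a d)) * (z * phi (be d))" by (simp only: left_diff_distrib mult.assoc)
    also have "\<dots> = (y - phi (a d)) * phi (be d) * z" using assms(2)[of "be d"] by (simp only: mult.assoc)
    finally show ?thesis .
  qed
  then show ?case using Cons by (simp add: mult.assoc[symmetric]) (simp add: mult.assoc)
qed

lemma gE1: assumes "i \<in> {1..n-1}" shows "g i * E (i+1) c = E i c * g i"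
  unfolding E_def by (rule move_E[OF g_t1[OF assms]]) (rule phi_c[symmetric])
lemma gE2: assumes "i \<in> {1..n-1}" shows "g i * E i c = E (i+1) c * g i"
  unfolding E_def by (rule move_E[OF g_t2[OF assms]]) (rule phi_c[symmetric])
lemma gE3: assumes "i \<in> {1..n-1}" "m \<in> {1..n}" "m \<noteq> i" "m \<noteq> i+1" shows "g i * E m c = E m c * g i"
  unfolding E_def by (rule move_E[OF g_t3[OF assms]]) (rule phi_c[symmetric])

definition sw :: "nat \<Rightarrow> nat \<Rightarrow> nat" where
  "sw i m = (if m = i then Suc i else if m = Suc i then i else m)"

lemma sw_K: assumes "k \<in> K" "i \<in> {1..n-1}" shows "k \<circ> sw i \<in> K"
  using assms unfolding K_def sw_def PiE_def Pi_def extensional_def by auto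

lemma gE: "i \<in> {1..n-1} \<Longrightarrow> m \<in> {1..n} \<Longrightarrow> g i * E m c = E (sw i m) c * g i"
  unfolding sw_def using gE1 gE2 gE3 by auto

lemma gP: assumes "i \<in> {1..n-1}" "set xs \<subseteq> {1..n}"
  shows "g i * P k xs = prod_list (map (\<lambda>m. E (sw i m) (k m)) xs) * g i"
  using assms(2)
proof (induction xs)
  case Nil then show ?case by (simp add: P_def)
next
  case (Cons m xs)
  have "g i * P k (m # xs) = (g i * E m (k m)) * P k xs" by (simp add: P_def mult.assoc)
  also have "\<dots> = E (sw i m) (k m) * (g i * P k xs)" using Cons assms(1) by (simp add: gE mult.assoc)
  also have "\<dots> = prod_list (map (\<lambda>m. E (sw i m) (k m)) (m # xs)) * g i" using Cons by (simp add: mult.assoc)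
  finally show ?case .
qed

lemma upt_split3: assumes "1 \<le> i" "i + 1 \<le> n" shows "[1..<n+1] = [1..<i] @ [i, Suc i] @ [i+2..<n+1]"
proof -
  have "[1..<n+1] = [1..<i] @ [i..<i+(n+1-i)]" using assms upt_add_eq_append[of 1 i "n+1-i"] by simp
  also have "i+(n+1-i) = n+1" using assms by simp
  also have "[i..<n+1] = i # Suc i # [i+2..<n+1]" using assms by (simp add: upt_conv_Cons)
  finally show ?thesis by simp
qed

lemma gb: assumes k: "k \<in> K" and i: "i \<in> {1..n-1}" shows "g i * b k = b (k \<circ> sw i) * g i"
proof -
  have "g i * b k = prod_list (map (\<lambda>m. E (sw i m) (k m)) [1..<n+1]) * g i"
    unfolding b_def using i by (intro gP) auto
  also have "prod_list (map (\<lambda>m. E (sw i m) (k m)) [1..<n+1]) = b (k \<circ> sw i)"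
  proof -
    have sp: "[1..<n+1] = [1..<i] @ [i, Suc i] @ [i+2..<n+1]" using i by (intro upt_split3) auto
    have a: "map (\<lambda>m. E (sw i m) (k m)) [1..<i] = map (\<lambda>m. E m ((k \<circ> sw i) m)) [1..<i]"
      by (auto simp: sw_def)
    have c: "map (\<lambda>m. E (sw i m) (k m)) [i+2..<n+1] = map (\<lambda>m. E m ((k \<circ> sw i) m)) [i+2..<n+1]"
      by (auto simp: sw_def)
    have m: "E (Suc i) (k i) * E i (k (Suc i)) = E i (k (Suc i)) * E (Suc i) (k i)"
      using i by (intro EE_comm) auto
    show ?thesis unfolding b_def P_def sp map_append prod_list.append a c
      by (simp add: sw_def m mult.assoc)
  qed
  finally show ?thesis .
qed

lemma Tq: assumes "i \<in> {1..n-1}" shows "T i * T i = lam * T i + 1"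
proof -
  have qq: "phi q * phi (rinv q) = 1"
    using qinv rinv_mult[of q] unfolding invertible_R_def by (metis dvdI phi_mult phi_one)
  have "(T i - phi q) * (T i + phi (rinv q)) = 0" using R1 assms by blast
  then have "T i * T i + T i * phi (rinv q) - phi q * T i - phi q * phi (rinv q) = 0"
    by (simp add: algebra_simps)
  moreover have "T i * phi (rinv q) = phi (rinv q) * T i" by (rule phi_c[symmetric])
  ultimately have "T i * T i + phi (rinv q) * T i - phi q * T i - 1 = 0" using qq by simp
  then have "T i * T i = phi q * T i - phi (rinv q) * T i + 1" by (simp add: algebra_simps)
  then show ?thesis by (simp add: lam_def phi_diff left_diff_distrib)
qed

lemma Tb: assumes "k \<in> K" shows "T i * b k = g i * b k + (if k i < k (i+1) then lam * b k else 0)"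
  using Bb[OF assms, of i] by (simp add: g_def' distrib_right)

definition cf :: "nat \<Rightarrow> (nat \<Rightarrow> nat) \<Rightarrow> 'a" where
  "cf i k = (if k i < k (i+1) then lam else 0)"

lemma cf_c: "cf i k * z = z * cf i k" unfolding cf_def by (simp add: lam_c)

lemma Tb': "k \<in> K \<Longrightarrow> T i * b k = g i * b k + cf i k * b k"
  using Tb[of k i] unfolding cf_def by simp

lemma T_cf: "T m * (cf j k' * Z) = cf j k' * (T m * Z)"
proof -
  have "T m * cf j k' = cf j k' * T m" by (rule cf_c[symmetric])
  then show ?thesis by (simp only: mult.assoc[symmetric])
qed

lemma T_gb': assumes k: "k \<in> K" and j: "j \<in> {1..n-1}"
  shows "T m * (g j * b k) = g m * (g j * b k) + cf m (k \<circ> sw j) * (g j * b k)"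
proof -
  note e = gb[OF k j]
  have "T m * (g j * b k) = (T m * b (k \<circ> sw j)) * g j" by (simp only: e mult.assoc)
  also have "\<dots> = (g m * b (k \<circ> sw j) + cf m (k \<circ> sw j) * b (k \<circ> sw j)) * g j"
    by (simp only: Tb'[OF sw_K[OF k j]])
  also have "\<dots> = g m * (g j * b k) + cf m (k \<circ> sw j) * (g j * b k)"
    by (simp only: distrib_right mult.assoc e)
  finally show ?thesis .
qed

lemma T_cb: "k \<in> K \<Longrightarrow> T m * (cf j k * b k) = cf j k * (g m * b k) + cf j k * (cf m k * b k)"
  by (simp only: T_cf Tb' distrib_left)

lemma part1: assumes i: "i \<in> {1..n-1}" and j: "j \<in> {1..n-1}" and ij: "i > j + 1 \<or> j > i + 1"
  shows "g i * g j = g j * g i"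
proof -
  have TT: "T i * T j = T j * T i" using R4 i j ij by blast
  have "g i * g j - g j * g i = 0"
  proof (rule zero_by_blocks)
    fix k assume k: "k \<in> K"
    have c1: "cf i (k \<circ> sw j) = cf i k" using ij unfolding cf_def sw_def by auto
    have c2: "cf j (k \<circ> sw i) = cf j k" using ij unfolding cf_def sw_def by auto
    have e1: "T i * (T j * b k) = g i * (g j * b k) + cf i k * (g j * b k) + (cf j k * (g i * b k) + cf j k * (cf i k * b k))"
      by (simp only: Tb'[OF k] distrib_left T_gb'[OF k j] T_cb[OF k] c1)
    have e2: "T j * (T i * b k) = g j * (g i * b k) + cf j k * (g i * b k) + (cf i k * (g j * b k) + cf i k * (cf j k * b k))"
      by (simp only: Tb'[OF k] distrib_left T_gb'[OF k i] T_cb[OF k] c2)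
    have cc: "cf j k * (cf i k * b k) = cf i k * (cf j k * b k)"
      by (simp only: mult.assoc[symmetric] cf_c[of j k "cf i k"])
    have TT': "T i * (T j * b k) = T j * (T i * b k)" using TT by (simp only: mult.assoc[symmetric])
    have "g i * (g j * b k) = g j * (g i * b k)"
      using TT' unfolding e1 e2 cc by (simp add: algebra_simps)
    then show "(g i * g j - g j * g i) * b k = 0"
      by (simp add: left_diff_distrib mult.assoc)
  qed
  then show ?thesis by simp
qed

lemma T_ggb: assumes k: "k \<in> K" and j1: "j1 \<in> {1..n-1}" and j2: "j2 \<in> {1..n-1}"
  shows "T m * (g j1 * (g j2 * b k)) = g m * (g j1 * (g j2 * b k)) + cf m (k \<circ> sw j2 \<circ> sw j1) * (g j1 * (g j2 * b k))"
proof -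
  have k1: "k \<circ> sw j2 \<in> K" by (intro sw_K k j2)
  have k2: "k \<circ> sw j2 \<circ> sw j1 \<in> K" by (intro sw_K k1 j1)
  have w: "g j1 * (g j2 * b k) = b (k \<circ> sw j2 \<circ> sw j1) * (g j1 * g j2)"
  proof -
    have "g j1 * (g j2 * b k) = (g j1 * b (k \<circ> sw j2)) * g j2" by (simp only: gb[OF k j2] mult.assoc)
    also have "\<dots> = b (k \<circ> sw j2 \<circ> sw j1) * (g j1 * g j2)" by (simp only: gb[OF k1 j1] mult.assoc)
    finally show ?thesis .
  qed
  have "T m * (b (k \<circ> sw j2 \<circ> sw j1) * (g j1 * g j2))
      = (g m * b (k \<circ> sw j2 \<circ> sw j1) + cf m (k \<circ> sw j2 \<circ> sw j1) * b (k \<circ> sw j2 \<circ> sw j1)) * (g j1 * g j2)"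
    by (simp only: mult.assoc[symmetric] Tb'[OF k2])
  also have "\<dots> = g m * (b (k \<circ> sw j2 \<circ> sw j1) * (g j1 * g j2)) + cf m (k \<circ> sw j2 \<circ> sw j1) * (b (k \<circ> sw j2 \<circ> sw j1) * (g j1 * g j2))"
    by (simp only: distrib_right mult.assoc)
  finally show ?thesis unfolding w .
qed

lemma gg: assumes k: "k \<in> K" and i: "i \<in> {1..n-1}"
  shows "g i * (g i * b k) = (if k i = k (i+1) then lam else 0) * (g i * b k) + b k"
proof -
  have "T i * (T i * b k) = lam * (T i * b k) + b k" using Tq[OF i] by (simp only: mult.assoc[symmetric] distrib_right mult_1_left)
  then have e: "g i * (g i * b k) + cf i (k \<circ> sw i) * (g i * b k) + (cf i k * (g i * b k) + cf i k * (cf i k * b k))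
     = lam * (g i * b k + cf i k * b k) + b k"
    by (simp only: Tb'[OF k] distrib_left T_gb'[OF k i] T_cb[OF k])
  show ?thesis
  proof (cases "k i < k (i+1)")
    case True
    then have "cf i k = lam" "cf i (k \<circ> sw i) = 0" by (auto simp: cf_def sw_def)
    then show ?thesis using e True by (simp add: algebra_simps)
  next
    case False
    then have "cf i k = 0" "cf i (k \<circ> sw i) = (if k i = k (i+1) then 0 else lam)" by (auto simp: cf_def sw_def)
    then show ?thesis using e False by (auto simp: algebra_simps)
  qed
qed

lemma part2: assumes i: "i \<in> {1..n-2}"
  shows "g i * g (i+1) * g i = g (i+1) * g i * g (i+1)"
proof -
  have i1: "i \<in> {1..n-1}" and i2: "i+1 \<in> {1..n-1}" using i by auto
  have TT: "T i * T (i+1) * T i = T (i+1) * T i * T (i+1)" using R3 i by blast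
  have "g i * g (i+1) * g i - g (i+1) * g i * g (i+1) = 0"
  proof (rule zero_by_blocks)
    fix k assume k: "k \<in> K"
    have kk: "k \<circ> sw i \<in> K" "k \<circ> sw (i+1) \<in> K" using sw_K k i1 i2 by auto
    have L: "T i * (T (i+1) * (T i * b k)) = 
       g i * (g (i+1) * (g i * b k)) + cf i (k \<circ> sw i \<circ> sw (i+1)) * (g (i+1) * (g i * b k))
       + cf (i+1) (k \<circ> sw i) * ((if k i = k (i+1) then lam else 0) * (g i * b k) + b k + cf i (k \<circ> sw i) * (g i * b k))
       + (cf i k * (g i * (g (i+1) * b k) + cf i (k \<circ> sw (i+1)) * (g (i+1) * b k))
       + cf i k * (cf (i+1) k * (g i * b k + cf i k * b k)))"
      by (simp only: Tb'[OF k] distrib_left T_gb'[OF k i1] T_gb'[OF k i2] T_ggb[OF k i2 i1] T_cf gg[OF k i1] add.assoc)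
    have R: "T (i+1) * (T i * (T (i+1) * b k)) = 
       g (i+1) * (g i * (g (i+1) * b k)) + cf (i+1) (k \<circ> sw (i+1) \<circ> sw i) * (g i * (g (i+1) * b k))
       + cf i (k \<circ> sw (i+1)) * ((if k (i+1) = k (i+1+1) then lam else 0) * (g (i+1) * b k) + b k + cf (i+1) (k \<circ> sw (i+1)) * (g (i+1) * b k))
       + (cf (i+1) k * (g (i+1) * (g i * b k) + cf (i+1) (k \<circ> sw i) * (g i * b k))
       + cf (i+1) k * (cf i k * (g (i+1) * b k + cf (i+1) k * b k)))"
      by (simp only: Tb'[OF k] distrib_left T_gb'[OF k i1] T_gb'[OF k i2] T_ggb[OF k i1 i2] T_cf gg[OF k i2] add.assoc)
    have LR: "T i * (T (i+1) * (T i * b k)) = T (i+1) * (T i * (T (i+1) * b k))"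
      using TT by (simp add: mult.assoc[symmetric])
    define a where "a = k i"
    define b' where "b' = k (Suc i)"
    define c where "c = k (Suc (Suc i))"
    have cfs: "cf i k = (if a < b' then lam else 0)"
      "cf (i+1) k = (if b' < c then lam else 0)"
      "cf i (k \<circ> sw i) = (if b' < a then lam else 0)"
      "cf (i+1) (k \<circ> sw i) = (if a < c then lam else 0)"
      "cf i (k \<circ> sw (i+1)) = (if a < c then lam else 0)"
      "cf (i+1) (k \<circ> sw (i+1)) = (if c < b' then lam else 0)"
      "cf i (k \<circ> sw i \<circ> sw (i+1)) = (if b' < c then lam else 0)"
      "cf (i+1) (k \<circ> sw (i+1) \<circ> sw i) = (if a < b' then lam else 0)"
      unfolding cf_def sw_def a_def b'_def c_def by auto
    have ifs: "k i = k (i+1) \<longleftrightarrow> a = b'" "k (i+1) = k (i+1+1) \<longleftrightarrow> b' = c"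
      unfolding a_def b'_def c_def by auto
    show "(g i * g (i+1) * g i - g (i+1) * g i * g (i+1)) * b k = 0"
      using braid_abs[OF LR[unfolded L R cfs ifs]] by (simp add: left_diff_distrib mult.assoc)
  qed
  then show ?thesis by simp
qed

end

theorem proposition3p6:
  fixes phi :: "'r::idom \<Rightarrow> 'a::ring_1"
    and n r :: nat and q :: 'r and u :: "nat \<Rightarrow> 'r"
    and t T :: "nat \<Rightarrow> 'a"
  assumes "n \<ge> 2" and "r \<ge> 1"
    and "invertible_R q" and "invertible_R (Delta r u)"
    and "alg_struct phi"
    and "shoji_rels phi n r q u t T"
  shows "(\<forall>i\<in>{1..n-1}. \<forall>j\<in>{1..n-1}. (i > j + 1 \<or> j > i + 1) \<longrightarrow>
            gen phi n r q u t T i * gen phi n r q u t T j = gen phi n r q u t T j * gen phi n r q u t T i)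
       \<and> (\<forall>i\<in>{1..n-2}. gen phi n r q u t T i * gen phi n r q u t T (i+1) * gen phi n r q u t T i
            = gen phi n r q u t T (i+1) * gen phi n r q u t T i * gen phi n r q u t T (i+1))"
proof -
  interpret shoji phi n r q u t T using assms by unfold_locales
  have G: "\<And>i. gen phi n r q u t T i = g i" by (simp add: g_def)
  show ?thesis unfolding G using part1 part2 by blast
qed

end
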